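(* There exist a financial system $S$ in the base model (all contracts of the same priority) and distinct banks $u_1,u_2,v_1,v_2$, with a debt contract of positive weight from $u_1$ to $v_1$ and one from $u_2$ to $v_2$, such that the following holds. For $(s_1,s_2)\in\{C,D\}^2$ let $S_{s_1s_2}$ be the system obtained from $S$ by deleting the debt contract from $u_i$ to $v_i$ for exactly those $i$ with $s_i=C$. Then each $S_{s_1s_2}$ has exactly one solution, and the payoffs $(q_{v_1},q_{v_2})$ at that solution are $(3,3)$ for $CC$, $(1,1)$ for $DD$, $(0,1)$ for $CD$, and $(1,0)$ for $DC$. In particular, in the two-player game where $v_i$ chooses $s_i$ and receives its payoff in $S_{s_1s_2}$, both $CC$ and $DD$ are pure Nash equilibria, and $CC$ gives each player strictly more than any other profile.
   Context: A financial system with payment priorities consists of: a finite set $V$ of banks; external assets $e_v\ge 0$ for each $v\in V$; a number $P\ge 1$ of priority levels; and a finite set of contracts, each of which is either a debt contract from a debtor $u$ to a creditor $v\neq u$ with weight $c>0$, or a credit default swap (CDS) from a debtor $u$ to a creditor $v\neq u$ in reference to a bank $w\notin\{u,v\}$ (the reference entity) with weight $c>0$. Every contract has a priority in $\{1,\dots,P\}$ (1 is the highest priority). It is assumed that every bank that is the reference entity of some CDS is the debtor of at least one debt contract of positive weight. Given a recovery rate vector $r\in[0,1]^V$: the liability of a contract $k$ is $l_k(r)=c$ if $k$ is a debt of weight $c$, and $l_k(r)=c\,(1-r_w)$ if $k$ is a CDS of weight $c$ in reference to $w$. For a bank $v$, $l_v(r)$ is the sum of the liabilities of the contracts with debtor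 $v$; $l_v^{(\rho)}(r)$ is the sum of the liabilities of contracts with debtor $v$ and priority $\rho$; and $l_v^{(\le\rho)}(r)=\sum_{i=1}^{\rho}l_v^{(i)}(r)$ (with $l_v^{(\le 0)}=0$). The payment on a contract $k$ with debtor $v$ and priority $\rho$ is $p_k(r)=l_k(r)\cdot\min\{1,\max\{0,(r_v l_v(r)-l_v^{(\le\rho-1)}(r))/l_v^{(\rho)}(r)\}\}$ (and $p_k(r)=0$ if $l_v^{(\rho)}(r)=0$). The assets of $v$ are $a_v(r)=e_v+\sum_k p_k(r)$, summing over contracts $k$ with creditor $v$. A vector $r\in[0,1]^V$ is a solution (clearing vector) if for every $v\in V$: $r_v=1$ when $a_v(r)\ge l_v(r)$, and $r_v=a_v(r)/l_v(r)$ when $a_v(r)<l_v(r)$. The payoff of $v$ is $q_v(r)=\max\{a_v(r)-l_v(r),0\}$. When $P=1$, payments reduce to $p_k(r)=r_v\,l_k(r)$ (principle of proportionality); this is called the base model. *)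

theory Defs
  imports Complex_Main "HOL-Library.Multiset"
begin

text \<open>Contracts: Debt debtor creditor weight priority;
  CDS debtor creditor reference weight priority.\<close>
datatype 'b contract =
    Debt 'b 'b real nat
  | CDS 'b 'b 'b real nat

fun debtor :: "'b contract \<Rightarrow> 'b" where
  "debtor (Debt u v c p) = u"
| "debtor (CDS u v w c p) = u"

fun creditor :: "'b contract \<Rightarrow> 'b" where
  "creditor (Debt u v c p) = v"
| "creditor (CDS u v w c p) = v"

fun weight :: "'b contract \<Rightarrow> real" where
  "weight (Debt u v c p) = c"
| "weight (CDS u v w c p) = c"

fun prio :: "'b contract \<Rightarrow> nat" where
  "prio (Debt u v c p) = p"
| "prio (CDS u v w c p) = p"

record 'b fsys =
  banks :: "'b set"
  ext :: "'b \<Rightarrow> real"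
  nprio :: nat
  contracts :: "'b contract multiset"

definition wf_contract :: "'b fsys \<Rightarrow> 'b contract \<Rightarrow> bool" where
  "wf_contract S k = (case k of
      Debt u v c p \<Rightarrow> u \<in> banks S \<and> v \<in> banks S \<and> u \<noteq> v \<and> c > 0 \<and> 1 \<le> p \<and> p \<le> nprio S
    | CDS u v w c p \<Rightarrow> u \<in> banks S \<and> v \<in> banks S \<and> w \<in> banks S \<and> u \<noteq> v \<and> w \<noteq> u \<and> w \<noteq> v
          \<and> c > 0 \<and> 1 \<le> p \<and> p \<le> nprio S)"

definition wf_fsys :: "'b fsys \<Rightarrow> bool" where
  "wf_fsys S = (finite (banks S) \<and> (\<forall>v\<in>banks S. ext S v \<ge> 0) \<and> nprio S \<ge> 1
     \<and> (\<forall>k\<in>#contracts S. wf_contract S k)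
     \<and> (\<forall>u v w c p. CDS u v w c p \<in># contracts S \<longrightarrow>
          (\<exists>x c' p'. Debt w x c' p' \<in># contracts S \<and> c' > 0)))"

definition base_model :: "'b fsys \<Rightarrow> bool" where
  "base_model S = (wf_fsys S \<and> nprio S = 1)"

fun liab :: "('b \<Rightarrow> real) \<Rightarrow> 'b contract \<Rightarrow> real" where
  "liab r (Debt u v c p) = c"
| "liab r (CDS u v w c p) = c * (1 - r w)"

definition liab_bank :: "'b fsys \<Rightarrow> ('b \<Rightarrow> real) \<Rightarrow> 'b \<Rightarrow> real" where
  "liab_bank S r v = sum_mset (image_mset (liab r) (filter_mset (\<lambda>k. debtor k = v) (contracts S)))"

definition liab_prio :: "'b fsys \<Rightarrow> ('b \<Rightarrow> real) \<Rightarrow> 'b \<Rightarrow> nat \<Rightarrow> real" where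
  "liab_prio S r v \<rho> = sum_mset (image_mset (liab r)
      (filter_mset (\<lambda>k. debtor k = v \<and> prio k = \<rho>) (contracts S)))"

definition liab_le :: "'b fsys \<Rightarrow> ('b \<Rightarrow> real) \<Rightarrow> 'b \<Rightarrow> nat \<Rightarrow> real" where
  "liab_le S r v \<rho> = (\<Sum>i=1..\<rho>. liab_prio S r v i)"

definition payment :: "'b fsys \<Rightarrow> ('b \<Rightarrow> real) \<Rightarrow> 'b contract \<Rightarrow> real" where
  "payment S r k = (let v = debtor k; \<rho> = prio k in
     if liab_prio S r v \<rho> = 0 then 0
     else liab r k * min 1 (max 0 ((r v * liab_bank S r v - liab_le S r v (\<rho> - 1)) / liab_prio S r v \<rho>)))"

definition assets :: "'b fsys \<Rightarrow> ('b \<Rightarrow> real) \<Rightarrow> 'b \<Rightarrow> real" where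
  "assets S r v = ext S v + sum_mset (image_mset (payment S r)
      (filter_mset (\<lambda>k. creditor k = v) (contracts S)))"

definition is_solution :: "'b fsys \<Rightarrow> ('b \<Rightarrow> real) \<Rightarrow> bool" where
  "is_solution S r = (\<forall>v\<in>banks S. 0 \<le> r v \<and> r v \<le> 1
      \<and> (assets S r v \<ge> liab_bank S r v \<longrightarrow> r v = 1)
      \<and> (assets S r v < liab_bank S r v \<longrightarrow> r v = assets S r v / liab_bank S r v))"

definition payoff :: "'b fsys \<Rightarrow> ('b \<Rightarrow> real) \<Rightarrow> 'b \<Rightarrow> real" where
  "payoff S r v = max (assets S r v - liab_bank S r v) 0"

text \<open>Solutions are vectors in [0,1]^V, so two solutions are identified when they agree on V.\<close>
definition unique_solution :: "'b fsys \<Rightarrow> ('b \<Rightarrow> real) \<Rightarrow> bool" where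
  "unique_solution S r = (is_solution S r \<and>
      (\<forall>r'. is_solution S r' \<longrightarrow> (\<forall>v\<in>banks S. r' v = r v)))"

definition delete_contract :: "'b contract \<Rightarrow> 'b fsys \<Rightarrow> 'b fsys" where
  "delete_contract k S = S\<lparr>contracts := contracts S - {#k#}\<rparr>"

text \<open>Strategy profile: True = C (delete own contract), False = D.\<close>
definition subsys :: "'b fsys \<Rightarrow> 'b contract \<Rightarrow> 'b contract \<Rightarrow> bool \<Rightarrow> bool \<Rightarrow> 'b fsys" where
  "subsys S k1 k2 s1 s2 =
     (if s2 then delete_contract k2 else id) ((if s1 then delete_contract k1 else id) S)"

end

theory Submission
  imports Defs
begin

lemma liab_le0[simp]: "liab_le S r v 0 = 0" by (simp add: liab_le_def)

lemma conv: "sum_mset (image_mset f (filter_mset P (mset xs))) = sum_list (map f (filter P xs))"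
  by (induction xs) auto

lemma pay:
  assumes cs: "contracts S = mset xs" and pr: "\<forall>k\<in>set xs. prio k = 1" and k: "k \<in> set xs"
    and b: "0 \<le> r (debtor k)" "r (debtor k) \<le> 1" and nn: "\<forall>k\<in>set xs. liab r k \<ge> 0"
  shows "payment S r k = liab r k * r (debtor k)"
proof -
  let ?v = "debtor k"
  have pk: "prio k = 1" using pr k by auto
  have lb: "liab_bank S r ?v = sum_list (map (liab r) (filter (\<lambda>k'. debtor k' = ?v) xs))"
    by (simp add: liab_bank_def cs conv)
  have "filter (\<lambda>k'. debtor k' = ?v \<and> prio k' = 1) xs = filter (\<lambda>k'. debtor k' = ?v) xs"
    using pr by (auto intro!: filter_cong)
  hence lp: "liab_prio S r ?v 1 = liab_bank S r ?v"
    by (simp add: liab_prio_def lb cs conv)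
  show ?thesis
  proof (cases "liab_bank S r ?v = 0")
    case True
    have "liab r k \<le> sum_list (map (liab r) (filter (\<lambda>k'. debtor k' = ?v) xs))"
      by (rule member_le_sum_list) (use k nn in auto)
    hence "liab r k = 0" using True lb nn k by auto
    thus ?thesis using True lp pk by (simp add: payment_def Let_def)
  next
    case False
    thus ?thesis using lp pk b by (simp add: payment_def Let_def)
  qed
qed

lemma assets_eq:
  assumes cs: "contracts S = mset xs" and pr: "\<forall>k\<in>set xs. prio k = 1"
    and b: "\<forall>k\<in>set xs. 0 \<le> r (debtor k) \<and> r (debtor k) \<le> 1" and nn: "\<forall>k\<in>set xs. liab r k \<ge> 0"
  shows "assets S r v = ext S v + sum_list (map (\<lambda>k. liab r k * r (debtor k)) (filter (\<lambda>k. creditor k = v) xs))"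
proof -
  have "map (payment S r) (filter (\<lambda>k. creditor k = v) xs) = map (\<lambda>k. liab r k * r (debtor k)) (filter (\<lambda>k. creditor k = v) xs)"
    by (rule map_cong[OF refl]) (use pay[OF cs pr _ _ _ nn] b in auto)
  thus ?thesis by (simp only: assets_def cs conv)
qed

lemma liab_eq:
  assumes cs: "contracts S = mset xs"
  shows "liab_bank S r v = sum_list (map (liab r) (filter (\<lambda>k. debtor k = v) xs))"
  by (simp add: liab_bank_def cs conv)

lemma assets_ge:
  assumes cs: "contracts S = mset xs" and pr: "\<forall>k\<in>set xs. prio k = 1"
    and b: "\<forall>k\<in>set xs. 0 \<le> r (debtor k) \<and> r (debtor k) \<le> 1" and nn: "\<forall>k\<in>set xs. liab r k \<ge> 0"
  shows "assets S r v \<ge> ext S v"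
  unfolding assets_eq[OF assms]
  using b nn by (auto intro!: sum_list_nonneg)

lemma sol_at: "is_solution S r \<Longrightarrow> v \<in> banks S \<Longrightarrow>
   r v = (if liab_bank S r v \<le> assets S r v then 1 else assets S r v / liab_bank S r v)"
  by (auto simp: is_solution_def not_le)

definition k1 :: "nat contract" where "k1 = Debt 0 2 1 1"
definition k2 :: "nat contract" where "k2 = Debt 1 3 1 1"
definition cs :: "nat contract list" where
 "cs = [k1, Debt 0 6 1 1, k2, Debt 1 6 1 1, Debt 4 2 4 1, Debt 5 3 4 1, CDS 4 6 1 24 1, CDS 5 6 0 24 1,
        CDS 6 4 0 24 1, CDS 6 5 1 24 1, CDS 2 6 0 5 1, CDS 3 6 1 5 1, Debt 2 6 1 1, Debt 3 6 1 1]"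
definition S0 :: "nat fsys" where
 "S0 = \<lparr>banks = {0,1,2,3,4,5,6}, ext = (\<lambda>v. if v \<le> 1 then 1 else if v = 4 \<or> v = 5 then 4 else if v = 6 then 100 else 0),
        nprio = 1, contracts = mset cs\<rparr>"

definition csT :: "bool \<Rightarrow> bool \<Rightarrow> nat contract list" where
 "csT s1 s2 = (if s2 then remove1 k2 else id) ((if s1 then remove1 k1 else id) cs)"

lemma T_banks[simp]: "banks (subsys S0 k1 k2 s1 s2) = {0,1,2,3,4,5,6}"
  by (simp add: subsys_def delete_contract_def S0_def)
lemma T_ext[simp]: "ext (subsys S0 k1 k2 s1 s2) = (\<lambda>v. if v \<le> 1 then 1 else if v = 4 \<or> v = 5 then 4 else if v = 6 then 100 else 0)"
  by (simp add: subsys_def delete_contract_def S0_def)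
lemma T_cs: "contracts (subsys S0 k1 k2 s1 s2) = mset (csT s1 s2)"
  by (simp add: subsys_def delete_contract_def S0_def csT_def mset_remove1)

lemma csT_prio: "\<forall>k\<in>set (csT s1 s2). prio k = 1"
  by (cases s1; cases s2; simp add: csT_def cs_def k1_def k2_def)

definition rsol :: "bool \<Rightarrow> bool \<Rightarrow> nat \<Rightarrow> real" where
 "rsol s1 s2 v = (if v = 0 then (if s1 then 1 else 1/2) else if v = 1 then (if s2 then 1 else 1/2)
    else if v = 4 \<and> s1 \<and> \<not> s2 then 1/4 else if v = 5 \<and> \<not> s1 \<and> s2 then 1/4 else 1)"

lemmas csdefs = csT_def cs_def k1_def k2_def

lemma uniq:
  assumes sol: "is_solution (subsys S0 k1 k2 s1 s2) r"
  shows "\<forall>v\<in>{0,1,2,3,4,5,6}. r v = rsol s1 s2 v"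
proof -
  let ?T = "subsys S0 k1 k2 s1 s2"
  have bd: "\<forall>v\<in>{0,1,2,3,4,5,6}. 0 \<le> r v \<and> r v \<le> 1"
    using sol by (simp add: is_solution_def)
  have bb: "\<forall>k\<in>set (csT s1 s2). 0 \<le> r (debtor k) \<and> r (debtor k) \<le> 1"
    using bd by (cases s1; cases s2; simp add: csdefs)
  have nn: "\<forall>k\<in>set (csT s1 s2). liab r k \<ge> 0"
    using bd by (cases s1; cases s2; simp add: csdefs)
  note AE = assets_eq[OF T_cs csT_prio bb nn]
  note LE = liab_eq[OF T_cs]
  note AG = assets_ge[OF T_cs csT_prio bb nn]
  have r0: "r 0 = (if s1 then 1 else 1/2)"
    using sol_at[OF sol, of 0] unfolding AE LE T_ext T_banks by (cases s1; cases s2; simp add: csdefs)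
  have r1: "r 1 = (if s2 then 1 else 1/2)"
    using sol_at[OF sol, of 1] unfolding AE LE T_ext T_banks by (cases s1; cases s2; simp add: csdefs)
  have "assets ?T r 6 \<ge> 100" using AG[of 6] by simp
  moreover have "liab_bank ?T r 6 \<le> 48"
    using r0 r1 unfolding LE by (cases s1; cases s2; simp add: csdefs)
  ultimately have r6: "r 6 = 1" using sol_at[OF sol, of 6] by simp
  have r4: "r 4 = (if s1 \<and> \<not> s2 then 1/4 else 1)"
    using sol_at[OF sol, of 4] r0 r1 r6 unfolding AE LE T_ext T_banks by (cases s1; cases s2; simp add: csdefs)
  have r5: "r 5 = (if \<not> s1 \<and> s2 then 1/4 else 1)"
    using sol_at[OF sol, of 5] r0 r1 r6 unfolding AE LE T_ext T_banks by (cases s1; cases s2; simp add: csdefs)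
  have r2: "r 2 = 1"
    using sol_at[OF sol, of 2] r0 r1 r4 unfolding AE LE T_ext T_banks by (cases s1; cases s2; simp add: csdefs)
  have r3: "r 3 = 1"
    using sol_at[OF sol, of 3] r0 r1 r5 unfolding AE LE T_ext T_banks by (cases s1; cases s2; simp add: csdefs)
  show ?thesis using r0 r1 r2 r3 r4 r5 r6 by (simp add: rsol_def)
qed

lemma exist_pay:
  "is_solution (subsys S0 k1 k2 s1 s2) (rsol s1 s2) \<and>
   payoff (subsys S0 k1 k2 s1 s2) (rsol s1 s2) 2 = (if s1 then (if s2 then 3 else 0) else 1) \<and>
   payoff (subsys S0 k1 k2 s1 s2) (rsol s1 s2) 3 = (if s2 then (if s1 then 3 else 0) else 1)"
proof -
  let ?r = "rsol s1 s2"
  have bb: "\<forall>k\<in>set (csT s1 s2). 0 \<le> ?r (debtor k) \<and> ?r (debtor k) \<le> 1"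
    by (cases s1; cases s2; simp add: csdefs rsol_def)
  have nn: "\<forall>k\<in>set (csT s1 s2). liab ?r k \<ge> 0"
    by (cases s1; cases s2; simp add: csdefs rsol_def)
  note AE = assets_eq[OF T_cs csT_prio bb nn]
  note LE = liab_eq[OF T_cs]
  show ?thesis
    unfolding is_solution_def payoff_def AE LE T_ext T_banks
    by (cases s1; cases s2; simp add: csdefs rsol_def)
qed

lemma base: "base_model S0"
  apply (simp add: base_model_def wf_fsys_def S0_def cs_def k1_def k2_def wf_contract_def)
  apply (intro allI conjI impI)
  apply (rule exI[of _ "6::nat"], rule exI[of _ "1::real"], simp)+
  done

theorem mainTheorem11:
  shows "\<exists>(S :: nat fsys) u1 u2 v1 v2 c1 c2.
    base_model S \<and> distinct [u1, u2, v1, v2] \<and> c1 > 0 \<and> c2 > 0 \<and>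
    Debt u1 v1 c1 1 \<in># contracts S \<and> Debt u2 v2 c2 1 \<in># contracts S \<and>
    (\<forall>s1 s2. \<exists>r. unique_solution (subsys S (Debt u1 v1 c1 1) (Debt u2 v2 c2 1) s1 s2) r \<and>
       (let T = subsys S (Debt u1 v1 c1 1) (Debt u2 v2 c2 1) s1 s2;
            q = (payoff T r v1, payoff T r v2) in
        (s1 \<and> s2 \<longrightarrow> q = (3, 3)) \<and>
        (\<not> s1 \<and> \<not> s2 \<longrightarrow> q = (1, 1)) \<and>
        (s1 \<and> \<not> s2 \<longrightarrow> q = (0, 1)) \<and>
        (\<not> s1 \<and> s2 \<longrightarrow> q = (1, 0))))"
proof -
  have H: "\<forall>s1 s2. \<exists>r. unique_solution (subsys S0 (Debt 0 2 1 1) (Debt 1 3 1 1) s1 s2) r \<and>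
       (let T = subsys S0 (Debt 0 2 1 1) (Debt 1 3 1 1) s1 s2;
            q = (payoff T r 2, payoff T r 3) in
        (s1 \<and> s2 \<longrightarrow> q = (3, 3)) \<and>
        (\<not> s1 \<and> \<not> s2 \<longrightarrow> q = (1, 1)) \<and>
        (s1 \<and> \<not> s2 \<longrightarrow> q = (0, 1)) \<and>
        (\<not> s1 \<and> s2 \<longrightarrow> q = (1, 0)))"
  proof (intro allI)
    fix s1 s2
    have U: "unique_solution (subsys S0 k1 k2 s1 s2) (rsol s1 s2)"
      using exist_pay uniq by (simp add: unique_solution_def)
    show "\<exists>r. unique_solution (subsys S0 (Debt 0 2 1 1) (Debt 1 3 1 1) s1 s2) r \<and>
       (let T = subsys S0 (Debt 0 2 1 1) (Debt 1 3 1 1) s1 s2;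
            q = (payoff T r 2, payoff T r 3) in
        (s1 \<and> s2 \<longrightarrow> q = (3, 3)) \<and>
        (\<not> s1 \<and> \<not> s2 \<longrightarrow> q = (1, 1)) \<and>
        (s1 \<and> \<not> s2 \<longrightarrow> q = (0, 1)) \<and>
        (\<not> s1 \<and> s2 \<longrightarrow> q = (1, 0)))"
      apply (rule exI[of _ "rsol s1 s2"])
      using U exist_pay[of s1 s2] unfolding k1_def k2_def by (cases s1; cases s2; simp add: Let_def)
  qed
  have m1: "Debt (0::nat) 2 1 1 \<in># contracts S0" by (simp add: S0_def cs_def k1_def)
  have m2: "Debt (1::nat) 3 1 1 \<in># contracts S0" by (simp add: S0_def cs_def k2_def)
  show ?thesis
    apply (rule exI[of _ S0], rule exI[of _ 0], rule exI[of _ 1], rule exI[of _ 2], rule exI[of _ 3],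
           rule exI[of _ 1], rule exI[of _ 1])
    using base H m1 m2 by simp
qed

end
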